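(* For every integer $N\ge 1$ there exists a $2$-$(4,N,2)$-tropical protocol.
   Context: Tropical arithmetic on $\mathbb{R}\cup\{\infty\}$: $x\oplus y=\min(x,y)$, $x\odot y=x+y$, with $x\oplus\infty=x$ and $x\odot\infty=\infty$; for a matrix $S$ and vector $\mathbf{x}$, $(S\odot\mathbf{x})_t=\min_j(S_{tj}+x_j)$. An $R$-$(T,N,D)$-tropical protocol consists of $R$ functions $\mathcal{S}^{(1)},\dots,\mathcal{S}^{(R)}$: $S^{(1)}=\mathcal{S}^{(1)}()$ is a fixed matrix, and for $r\ge 2$, $S^{(r)}=\mathcal{S}^{(r)}$ applied to the results $\bigl(S^{(1)};\dots;S^{(r-1)}\bigr)\odot\mathbf{x}$ of all previous rounds (vertical stacking); each $S^{(r)}$ has $N$ columns, entries in $\{0\}\cup\mathbb{N}\cup\{\infty\}$, and a number of rows that may depend on previous results, the total number of rows being at most $T$ for every $\mathbf{x}$; and the final result $\bigl(S^{(1)};\dots;S^{(R)}\bigr)\odot\mathbf{x}$ determines $\mathbf{x}$ uniquely among all $\mathbf{x}\in(\{0\}\cup\mathbb{N}\cup\{\infty\})^N$ with at most $D$ finite entries. It is within maximum delay $\ell$ if all schedule matrices use only entries in $\{0,1,\dots,\ell,\infty\}$. *)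

theory Defs
  imports Main "HOL-Library.Extended_Nat"
begin

text \<open>Values in {0} \<union> \<nat> \<union> {\<infinity>} are modelled by enat. Vectors of length N are lists of
length N, matrices are lists of rows (each row a list of length N).\<close>

definition trop_row :: "enat list \<Rightarrow> enat list \<Rightarrow> enat" where
  "trop_row r x = foldr min (map2 (+) r x) \<infinity>"

definition trop_mult :: "enat list list \<Rightarrow> enat list \<Rightarrow> enat list" where
  "trop_mult S x = map (\<lambda>r. trop_row r x) S"

text \<open>A protocol is a list of round functions; round r receives the results of
all previous rounds (vertically stacked), the first round receives the empty list,
so its schedule matrix is fixed.\<close>

definition proto_run :: "(enat list \<Rightarrow> enat list list) list \<Rightarrow> enat list \<Rightarrow> enat list" where
  "proto_run fs x = foldl (\<lambda>y f. y @ trop_mult (f y) x) [] fs"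

definition proto_sched :: "(enat list \<Rightarrow> enat list list) list \<Rightarrow> enat list \<Rightarrow> nat \<Rightarrow> enat list list" where
  "proto_sched fs x r = (fs ! r) (proto_run (take r fs) x)"

definition num_finite :: "enat list \<Rightarrow> nat" where
  "num_finite x = card {j. j < length x \<and> x ! j \<noteq> \<infinity>}"

definition tropical_protocol ::
  "nat \<Rightarrow> nat \<Rightarrow> nat \<Rightarrow> nat \<Rightarrow> (enat list \<Rightarrow> enat list list) list \<Rightarrow> bool" where
  "tropical_protocol R T N D fs \<longleftrightarrow>
     length fs = R \<and>
     (\<forall>x. length x = N \<longrightarrow>
        (\<forall>r<R. \<forall>row \<in> set (proto_sched fs x r). length row = N) \<and>
        length (proto_run fs x) \<le> T) \<and>
     (\<forall>x y. length x = N \<and> length y = N \<and> num_finite x \<le> D \<and> num_finite y \<le> D \<and>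
        proto_run fs x = proto_run fs y \<longrightarrow> x = y)"

end

theory Submission
  imports Defs
begin


lemma foldr_min_Min: "foldr min xs (b::enat) = Min (insert b (set xs))"
proof (induction xs)
  case (Cons a xs)
  have "Min (insert b (set (a#xs))) = Min (insert a (insert b (set xs)))" by (simp add: insert_commute)
  also have "\<dots> = min a (Min (insert b (set xs)))" by (simp add: Min_insert)
  finally show ?case using Cons by simp
qed simp

lemma set_map2_nth: "length r = length x \<Longrightarrow> set (map2 (+) r x) = (\<lambda>j. r!j + x!j) ` {..<length x}"
proof -
  assume "length r = length x"
  then have "map2 (+) r x = map (\<lambda>j. r!j + x!j) [0..<length x]"
    by (intro nth_equalityI) auto
  then show ?thesis by auto
qed

lemma trop_le: "length r = length x \<Longrightarrow> j < length x \<Longrightarrow> trop_row r x \<le> r!j + x!j"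
  unfolding trop_row_def foldr_min_Min
  using set_map2_nth[of r x] by (intro Min_le) auto

lemma trop_sparse:
  assumes "length r = length x" "k < length x" "l < length x"
    "\<forall>j<length x. j \<noteq> k \<and> j \<noteq> l \<longrightarrow> x!j = \<infinity>"
  shows "trop_row r x = min (r!k + x!k) (r!l + x!l)"
proof (rule antisym)
  show "trop_row r x \<le> min (r!k + x!k) (r!l + x!l)"
    using trop_le[OF assms(1)] assms by simp
  show "min (r!k + x!k) (r!l + x!l) \<le> trop_row r x"
    unfolding trop_row_def foldr_min_Min
  proof (subst Min_ge_iff)
    show "\<forall>a\<in>insert \<infinity> (set (map2 (+) r x)). min (r ! k + x ! k) (r ! l + x ! l) \<le> a"
    proof
      fix a assume "a \<in> insert \<infinity> (set (map2 (+) r x))"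
      then consider "a = \<infinity>" | j where "j < length x" "a = r!j + x!j"
        using set_map2_nth[OF assms(1)] by auto
      then show "min (r ! k + x ! k) (r ! l + x ! l) \<le> a"
      proof cases
        case 1 then show ?thesis by simp
      next
        case 2
        then show ?thesis using assms(4)
          by (cases "j = k"; cases "j = l") (auto simp: min_le_iff_disj)
      qed
    qed
  qed auto
qed

lemma support2:
  fixes N :: nat
  assumes "finite S" "card S \<le> 2" "S \<subseteq> {..<N}" "N \<ge> 1"
  shows "\<exists>k l. k < N \<and> l < N \<and> S \<subseteq> {k,l}"
proof -
  consider "card S = 0" | "card S = 1" | "card S = 2" using assms(2) by linarith
  then show ?thesis
  proof cases
    case 1 then have "S = {}" using assms(1) by simp
    moreover have "0 < N" using assms(4) by simp
    ultimately show ?thesis by blast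
  next
    case 2 then obtain k where "S = {k}" by (auto simp: card_1_singleton_iff)
    then show ?thesis using assms(3) by auto
  next
    case 3 then obtain k l where "S = {k,l}" by (auto simp: card_2_iff)
    then show ?thesis using assms(3) by auto
  qed
qed

definition g3 :: "nat \<Rightarrow> nat \<Rightarrow> nat \<Rightarrow> nat \<Rightarrow> enat" where
 "g3 N a c j = (if 2*j + c < a + N then 0 else if a + N < 2*j + c then enat (a+c+1+j) else \<infinity>)"
definition g4 :: "nat \<Rightarrow> nat \<Rightarrow> nat \<Rightarrow> nat \<Rightarrow> enat" where
 "g4 N a c j = (if 2*j + c < a + N then enat (a+c+1+j) else if a + N < 2*j + c then 0 else \<infinity>)"

definition cls_arms :: "nat \<Rightarrow> nat \<Rightarrow> nat \<Rightarrow> enat list \<Rightarrow> enat \<Rightarrow> enat \<Rightarrow> bool" where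
 "cls_arms N a c x R3 R4 \<longleftrightarrow> (\<exists>p q. p<N \<and> q<N \<and> 2*p+c < a+N \<and> a+N < 2*q+c \<and> p \<le> a \<and> N \<le> c+q \<and>
    (\<forall>j<N. x!j = (if j=p then enat(a-p) else if j=q then enat (c+q-N) else \<infinity>)) \<and>
    R3 = enat(a-p) \<and> R4 = enat(c+q-N))"
definition cls_vs :: "nat \<Rightarrow> nat \<Rightarrow> nat \<Rightarrow> enat list \<Rightarrow> enat \<Rightarrow> enat \<Rightarrow> bool" where
 "cls_vs N a c x R3 R4 \<longleftrightarrow> (\<exists>v. v<N \<and> 2*v+c = a+N \<and> v \<le> a \<and>
    (\<forall>j<N. x!j = (if j=v then enat(a-v) else \<infinity>)) \<and> R3 = \<infinity> \<and> R4 = \<infinity>)"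
definition cls_vl :: "nat \<Rightarrow> nat \<Rightarrow> nat \<Rightarrow> enat list \<Rightarrow> enat \<Rightarrow> enat \<Rightarrow> bool" where
 "cls_vl N a c x R3 R4 \<longleftrightarrow> (\<exists>v Q w. v<N \<and> Q<N \<and> 2*v+c = a+N \<and> v \<le> a \<and> 2*Q+c < a+N \<and>
    (\<forall>j<N. x!j = (if j=v then enat(a-v) else if j=Q then enat w else \<infinity>)) \<and>
    R3 = enat w \<and> R4 = enat (w + (a+c+1+Q)))"
definition cls_vr :: "nat \<Rightarrow> nat \<Rightarrow> nat \<Rightarrow> enat list \<Rightarrow> enat \<Rightarrow> enat \<Rightarrow> bool" where
 "cls_vr N a c x R3 R4 \<longleftrightarrow> (\<exists>v Q w. v<N \<and> Q<N \<and> 2*v+c = a+N \<and> v \<le> a \<and> a+N < 2*Q+c \<and>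
    (\<forall>j<N. x!j = (if j=v then enat(a-v) else if j=Q then enat w else \<infinity>)) \<and>
    R3 = enat (w + (a+c+1+Q)) \<and> R4 = enat w)"

lemma single_entry:
  fixes N a c k u :: nat
  assumes "k<N" "\<forall>j<N. x!j = (if j=k then enat u else \<infinity>)"
    "u+k = a" "u+(N-k) = c"
  shows "cls_vs N a c x (g3 N a c k + enat u) (g4 N a c k + enat u)"
  unfolding cls_vs_def
proof (rule exI[where x=k], intro conjI)
  show "2*k+c = a+N" using assms by simp
  then show "g3 N a c k + enat u = \<infinity>" "g4 N a c k + enat u = \<infinity>"
    by (auto simp: g3_def g4_def)
qed (use assms in auto)

lemma vertex_two:
  fixes N a c k l u w :: nat
  assumes "k<N" "l<N" "k\<noteq>l" "\<forall>j<N. x!j = (if j=k then enat u else if j=l then enat w else \<infinity>)"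
    "u+k = a" "u+(N-k) = c"
  shows "cls_vl N a c x (min (g3 N a c k + enat u) (g3 N a c l + enat w)) (min (g4 N a c k + enat u) (g4 N a c l + enat w))
       \<or> cls_vr N a c x (min (g3 N a c k + enat u) (g3 N a c l + enat w)) (min (g4 N a c k + enat u) (g4 N a c l + enat w))"
proof -
  have v: "2*k+c = a+N" using assms by simp
  then have gk: "g3 N a c k = \<infinity>" "g4 N a c k = \<infinity>" by (auto simp: g3_def g4_def)
  have "2*l+c \<noteq> a+N" using v assms(3) by simp
  then consider "2*l+c < a+N" | "a+N < 2*l+c" by linarith
  then show ?thesis
  proof cases
    case 1
    then have "g3 N a c l = 0" "g4 N a c l = enat (a+c+1+l)" by (auto simp: g3_def g4_def)
    then have "cls_vl N a c x (min (g3 N a c k + enat u) (g3 N a c l + enat w)) (min (g4 N a c k + enat u) (g4 N a c l + enat w))"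
      unfolding cls_vl_def
      apply (rule_tac x=k in exI, rule_tac x=l in exI, rule_tac x=w in exI)
      using assms v 1 gk by (auto simp: add.commute)
    then show ?thesis ..
  next
    case 2
    then have "g4 N a c l = 0" "g3 N a c l = enat (a+c+1+l)" by (auto simp: g3_def g4_def)
    then have "cls_vr N a c x (min (g3 N a c k + enat u) (g3 N a c l + enat w)) (min (g4 N a c k + enat u) (g4 N a c l + enat w))"
      unfolding cls_vr_def
      apply (rule_tac x=k in exI, rule_tac x=l in exI, rule_tac x=w in exI)
      using assms v 2 gk by (auto simp: add.commute)
    then show ?thesis ..
  qed
qed

lemma arms_two:
  fixes N a c k l u w :: nat
  assumes "k<N" "l<N" "k\<noteq>l" "\<forall>j<N. x!j = (if j=k then enat u else if j=l then enat w else \<infinity>)"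
    "u+k = a" "u+(N-k) > c" "w + (N-l) = c" "w + l > a"
  shows "cls_arms N a c x (min (g3 N a c k + enat u) (g3 N a c l + enat w)) (min (g4 N a c k + enat u) (g4 N a c l + enat w))"
proof -
  have L: "2*k+c < a+N" using assms by simp
  have R: "a+N < 2*l+c" using assms by simp
  have gk: "g3 N a c k = 0" "g4 N a c k = enat (a+c+1+k)" using L by (auto simp: g3_def g4_def)
  have gl: "g4 N a c l = 0" "g3 N a c l = enat (a+c+1+l)" using R by (auto simp: g3_def g4_def)
  show ?thesis
    unfolding cls_arms_def
    apply (rule_tac x=k in exI, rule_tac x=l in exI)
    using assms L R gk gl by auto
qed

definition cls :: "nat \<Rightarrow> nat \<Rightarrow> nat \<Rightarrow> enat list \<Rightarrow> enat \<Rightarrow> enat \<Rightarrow> bool" where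
 "cls N a c x R3 R4 \<longleftrightarrow> cls_arms N a c x R3 R4 \<or> cls_vs N a c x R3 R4 \<or> cls_vl N a c x R3 R4 \<or> cls_vr N a c x R3 R4"

lemma classify:
  fixes N a c k l :: nat
  assumes "k<N" "l<N" "\<forall>j<N. j\<noteq>k \<and> j\<noteq>l \<longrightarrow> x!j = \<infinity>"
   and A: "min (enat k + x!k) (enat l + x!l) = enat a"
   and C: "min (enat (N-k) + x!k) (enat (N-l) + x!l) = enat c"
  shows "cls N a c x (min (g3 N a c k + x!k) (g3 N a c l + x!l)) (min (g4 N a c k + x!k) (g4 N a c l + x!l))"
proof (cases "x!k")
  case (enat u)
  show ?thesis
  proof (cases "x!l")
    case infinity
    then have "k \<noteq> l" using enat by auto
    have X: "\<forall>j<N. x!j = (if j=k then enat u else \<infinity>)" using assms(3) enat infinity by auto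
    have "u+k = a" "u+(N-k) = c" using A C enat infinity by auto
    from single_entry[OF assms(1) X this] show ?thesis using enat infinity by (simp add: cls_def)
  next
    case (enat w)
    note u = \<open>x!k = enat u\<close>
    show ?thesis
    proof (cases "k = l")
      case True
      then have "u = w" using u enat by simp
      have X: "\<forall>j<N. x!j = (if j=k then enat u else \<infinity>)" using assms(3) u True by auto
      have "u+k = a" "u+(N-k) = c" using A C u True by auto
      from single_entry[OF assms(1) X this] show ?thesis using u True by (simp add: cls_def)
    next
      case False
      have X: "\<forall>j<N. x!j = (if j=k then enat u else if j=l then enat w else \<infinity>)" using assms(3) u enat by auto
      have X': "\<forall>j<N. x!j = (if j=l then enat w else if j=k then enat u else \<infinity>)" using X False by auto
      have a: "min (u+k) (w+l) = a" and c: "min (u+(N-k)) (w+(N-l)) = c" using A C u enat by (auto simp: add.commute)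
      consider "u+k = a \<and> u+(N-k) = c" | "w+l = a \<and> w+(N-l) = c"
        | "u+k = a \<and> u+(N-k) > c \<and> w+(N-l) = c \<and> w+l > a"
        | "w+l = a \<and> w+(N-l) > c \<and> u+(N-k) = c \<and> u+k > a"
        using a c by linarith
      then show ?thesis
      proof cases
        case 1
        from vertex_two[OF assms(1,2) False X] 1 show ?thesis using u enat by (auto simp: cls_def)
      next
        case 2
        from vertex_two[of l N k x w u a c] False X' 2 assms(1,2) show ?thesis using u enat by (auto simp: cls_def min.commute)
      next
        case 3
        from arms_two[OF assms(1,2) False X] 3 show ?thesis using u enat by (auto simp: cls_def)
      next
        case 4
        from arms_two[of l N k x w u a c] False X' 4 assms(1,2) show ?thesis using u enat by (auto simp: cls_def min.commute)
      qed
    qed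
  qed
next
  case infinity
  show ?thesis
  proof (cases "x!l")
    case infinity': infinity
    then show ?thesis using A infinity by simp
  next
    case (enat w)
    then have "k \<noteq> l" using infinity by auto
    have X: "\<forall>j<N. x!j = (if j=l then enat w else \<infinity>)" using assms(3) enat infinity by auto
    have "w+l = a" "w+(N-l) = c" using A C enat infinity by auto
    from single_entry[OF assms(2) X this] show ?thesis using enat infinity by (simp add: cls_def)
  qed
qed




lemma arms_arms: assumes "cls_arms N a c x R3 R4" "cls_arms N a c y R3 R4" shows "\<forall>j<N. x!j = y!j"
proof -
  obtain p q where P: "p<N" "q<N" "p \<le> a" "N \<le> c+q"
    "\<forall>j<N. x!j = (if j=p then enat(a-p) else if j=q then enat (c+q-N) else \<infinity>)"
    "R3 = enat(a-p)" "R4 = enat(c+q-N)" using assms(1) unfolding cls_arms_def by blast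
  obtain p' q' where P': "p'<N" "q'<N" "p' \<le> a" "N \<le> c+q'"
    "\<forall>j<N. y!j = (if j=p' then enat(a-p') else if j=q' then enat (c+q'-N) else \<infinity>)"
    "R3 = enat(a-p')" "R4 = enat(c+q'-N)" using assms(2) unfolding cls_arms_def by blast
  have "p = p'" using P(3,6) P'(3,6) by simp
  moreover have "q = q'" using P(4,7) P'(4,7) by simp
  ultimately show ?thesis using P(5) P'(5) by simp
qed


lemma vs_vs: assumes "cls_vs N a c x R3 R4" "cls_vs N a c y R3 R4" shows "\<forall>j<N. x!j = y!j"
proof -
  obtain v where P: "2*v+c = a+N" "\<forall>j<N. x!j = (if j=v then enat(a-v) else \<infinity>)"
    using assms(1) unfolding cls_vs_def by blast
  obtain v' where P': "2*v'+c = a+N" "\<forall>j<N. y!j = (if j=v' then enat(a-v') else \<infinity>)"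
    using assms(2) unfolding cls_vs_def by blast
  have "v = v'" using P(1) P'(1) by simp
  then show ?thesis using P(2) P'(2) by simp
qed

lemma vl_vl: assumes "cls_vl N a c x R3 R4" "cls_vl N a c y R3 R4" shows "\<forall>j<N. x!j = y!j"
proof -
  obtain v Q w where P: "2*v+c = a+N"
    "\<forall>j<N. x!j = (if j=v then enat(a-v) else if j=Q then enat w else \<infinity>)"
    "R3 = enat w" "R4 = enat (w + (a+c+1+Q))" using assms(1) unfolding cls_vl_def by blast
  obtain v' Q' w' where P': "2*v'+c = a+N"
    "\<forall>j<N. y!j = (if j=v' then enat(a-v') else if j=Q' then enat w' else \<infinity>)"
    "R3 = enat w'" "R4 = enat (w' + (a+c+1+Q'))" using assms(2) unfolding cls_vl_def by blast
  have "v = v'" using P(1) P'(1) by simp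
  moreover have "w = w'" using P(3) P'(3) by simp
  moreover have "Q = Q'" using P(4) P'(4) \<open>w = w'\<close> by simp
  ultimately show ?thesis using P(2) P'(2) by simp
qed

lemma vr_vr: assumes "cls_vr N a c x R3 R4" "cls_vr N a c y R3 R4" shows "\<forall>j<N. x!j = y!j"
proof -
  obtain v Q w where P: "2*v+c = a+N"
    "\<forall>j<N. x!j = (if j=v then enat(a-v) else if j=Q then enat w else \<infinity>)"
    "R3 = enat (w + (a+c+1+Q))" "R4 = enat w" using assms(1) unfolding cls_vr_def by blast
  obtain v' Q' w' where P': "2*v'+c = a+N"
    "\<forall>j<N. y!j = (if j=v' then enat(a-v') else if j=Q' then enat w' else \<infinity>)"
    "R3 = enat (w' + (a+c+1+Q'))" "R4 = enat w'" using assms(2) unfolding cls_vr_def by blast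
  have "v = v'" using P(1) P'(1) by simp
  moreover have "w = w'" using P(4) P'(4) by simp
  moreover have "Q = Q'" using P(3) P'(3) \<open>w = w'\<close> by simp
  ultimately show ?thesis using P(2) P'(2) by simp
qed

lemma arms_vs: assumes "cls_arms N a c x R3 R4" "cls_vs N a c y R3 R4" shows False
proof -
  obtain p where "R3 = enat(a-p)" using assms(1) unfolding cls_arms_def by blast
  moreover have "R3 = \<infinity>" using assms(2) unfolding cls_vs_def by blast
  ultimately show False by simp
qed

lemma arms_vl: assumes "cls_arms N a c x R3 R4" "cls_vl N a c y R3 R4" shows False
proof -
  obtain q where "q<N" "R4 = enat(c+q-N)" using assms(1) unfolding cls_arms_def by blast
  moreover obtain Q w where "R4 = enat (w + (a+c+1+Q))" using assms(2) unfolding cls_vl_def by blast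
  ultimately show False by simp
qed

lemma arms_vr: assumes "cls_arms N a c x R3 R4" "cls_vr N a c y R3 R4" shows False
proof -
  obtain p where "R3 = enat(a-p)" using assms(1) unfolding cls_arms_def by blast
  moreover obtain Q w where "R3 = enat (w + (a+c+1+Q))" using assms(2) unfolding cls_vr_def by blast
  ultimately show False by simp
qed

lemma vs_vl: assumes "cls_vs N a c x R3 R4" "cls_vl N a c y R3 R4" shows False
proof -
  have "R3 = \<infinity>" using assms(1) unfolding cls_vs_def by blast
  moreover obtain w where "R3 = enat w" using assms(2) unfolding cls_vl_def by blast
  ultimately show False by simp
qed

lemma vs_vr: assumes "cls_vs N a c x R3 R4" "cls_vr N a c y R3 R4" shows False
proof -
  have "R4 = \<infinity>" using assms(1) unfolding cls_vs_def by blast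
  moreover obtain w where "R4 = enat w" using assms(2) unfolding cls_vr_def by blast
  ultimately show False by simp
qed

lemma vl_vr: assumes "cls_vl N a c x R3 R4" "cls_vr N a c y R3 R4" shows False
proof -
  obtain Q w where "R3 = enat w" "R4 = enat (w + (a+c+1+Q))" using assms(1) unfolding cls_vl_def by blast
  moreover obtain Q' w' where "R3 = enat (w' + (a+c+1+Q'))" "R4 = enat w'" using assms(2) unfolding cls_vr_def by blast
  ultimately show False by simp
qed

lemma cls_inj:
  assumes "cls N a c x R3 R4" "cls N a c y R3 R4" "length x = N" "length y = N"
  shows "x = y"
proof -
  have "\<forall>j<N. x!j = y!j"
    using assms(1,2) unfolding cls_def
    apply (elim disjE)
    using arms_arms vs_vs vl_vl vr_vr arms_vs arms_vl arms_vr vs_vl vs_vr vl_vr by metis+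
  then show ?thesis using assms(3,4) by (auto intro: nth_equalityI)
qed

lemma sparse_of:
  assumes "length x = N" "N \<ge> 1" "num_finite x \<le> 2"
  obtains k l where "k<N" "l<N" "\<forall>j<N. j\<noteq>k \<and> j\<noteq>l \<longrightarrow> x!j = \<infinity>"
proof -
  have "finite {j. j < length x \<and> x ! j \<noteq> \<infinity>}" by simp
  from support2[OF this _ _ assms(2)] assms obtain k l where
    "k<N" "l<N" "{j. j < length x \<and> x ! j \<noteq> \<infinity>} \<subseteq> {k,l}"
    unfolding num_finite_def by auto
  moreover have "\<forall>j<N. j\<noteq>k \<and> j\<noteq>l \<longrightarrow> x!j = \<infinity>" using calculation(3) assms(1) by blast
  ultimately show ?thesis using that by blast
qed

lemma cls_of:
  assumes "length x = N" "N \<ge> 1" "num_finite x \<le> 2"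
    "trop_row (map enat [0..<N]) x = enat a" "trop_row (map (\<lambda>j. enat (N-j)) [0..<N]) x = enat c"
  shows "cls N a c x (trop_row (map (g3 N a c) [0..<N]) x) (trop_row (map (g4 N a c) [0..<N]) x)"
proof -
  obtain k l where kl: "k<N" "l<N" "\<forall>j<N. j\<noteq>k \<and> j\<noteq>l \<longrightarrow> x!j = \<infinity>"
    using sparse_of[OF assms(1-3)] by blast
  have sp: "trop_row r x = min (r!k + x!k) (r!l + x!l)" if "length r = N" for r
    using trop_sparse[of r x k l] that kl assms(1) by simp
  have A: "min (enat k + x!k) (enat l + x!l) = enat a" using sp[of "map enat [0..<N]"] assms(4) kl by simp
  have C: "min (enat (N-k) + x!k) (enat (N-l) + x!l) = enat c"
    using sp[of "map (\<lambda>j. enat (N-j)) [0..<N]"] assms(5) kl by simp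
  show ?thesis using classify[OF kl A C] sp[of "map (g3 N a c) [0..<N]"] sp[of "map (g4 N a c) [0..<N]"] kl by simp
qed

definition f1 :: "nat \<Rightarrow> enat list \<Rightarrow> enat list list" where
  "f1 N = (\<lambda>_. [map enat [0..<N], map (\<lambda>j. enat (N-j)) [0..<N]])"
definition f2 :: "nat \<Rightarrow> enat list \<Rightarrow> enat list list" where
  "f2 N = (\<lambda>y. [map (g3 N (the_enat (y!0)) (the_enat (y!1))) [0..<N], map (g4 N (the_enat (y!0)) (the_enat (y!1))) [0..<N]])"

lemma run_eq: "proto_run [f1 N, f2 N] x =
  [trop_row (map enat [0..<N]) x, trop_row (map (\<lambda>j. enat (N-j)) [0..<N]) x,
   trop_row (map (g3 N (the_enat (trop_row (map enat [0..<N]) x)) (the_enat (trop_row (map (\<lambda>j. enat (N-j)) [0..<N]) x))) [0..<N]) x,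
   trop_row (map (g4 N (the_enat (trop_row (map enat [0..<N]) x)) (the_enat (trop_row (map (\<lambda>j. enat (N-j)) [0..<N]) x))) [0..<N]) x]"
  by (simp add: proto_run_def trop_mult_def f1_def f2_def)

theorem mainTheorem16:
  fixes N :: nat
  assumes "N \<ge> 1"
  shows "\<exists>fs. tropical_protocol 2 4 N 2 fs"
proof (intro exI[of _ "[f1 N, f2 N]"])
  let ?A = "\<lambda>x. trop_row (map enat [0..<N]) x"
  let ?C = "\<lambda>x. trop_row (map (\<lambda>j. enat (N-j)) [0..<N]) x"
  have inf: "\<forall>j<N. x!j = \<infinity>" if "length x = N" "?A x = \<infinity>" for x
  proof (intro allI impI)
    fix j assume "j < N"
    then have "?A x \<le> enat j + x!j" using trop_le[of "map enat [0..<N]" x j] that by simp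
    then show "x!j = \<infinity>" using that by (cases "x!j") auto
  qed
  have finC: "\<exists>c. ?C x = enat c" if hx: "length x = N" "?A x = enat a" "num_finite x \<le> 2" for x a
  proof (rule ccontr)
    assume "\<nexists>c. ?C x = enat c"
    then have Ci: "?C x = \<infinity>" by (cases "?C x") auto
    have "\<forall>j<N. x!j = \<infinity>"
    proof (intro allI impI)
      fix j assume "j < N"
      then have "?C x \<le> enat (N-j) + x!j" using trop_le[of "map (\<lambda>j. enat (N-j)) [0..<N]" x j] hx by simp
      then show "x!j = \<infinity>" using Ci by (cases "x!j") auto
    qed
    moreover obtain j where "j<N" "?A x = enat j + x!j"
    proof -
      obtain k l where kl: "k<N" "l<N" "\<forall>j<N. j\<noteq>k \<and> j\<noteq>l \<longrightarrow> x!j = \<infinity>"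
        using sparse_of[OF hx(1) assms hx(3)] by blast
      have "?A x = min (enat k + x!k) (enat l + x!l)"
        using trop_sparse[of "map enat [0..<N]" x k l] kl hx(1) by simp
      then show ?thesis using that kl by (auto simp: min_def split: if_splits)
    qed
    ultimately show False using hx(2) by simp
  qed
  have P1: "\<forall>x. length x = N \<longrightarrow>
        (\<forall>r<2. \<forall>row \<in> set (proto_sched [f1 N, f2 N] x r). length row = N) \<and>
        length (proto_run [f1 N, f2 N] x) \<le> 4"
  proof (intro allI impI conjI)
    fix x :: "enat list" and r assume "length x = N" "r < (2::nat)"
    then show "\<forall>row \<in> set (proto_sched [f1 N, f2 N] x r). length row = N"
      by (cases r) (auto simp: proto_sched_def f1_def f2_def less_Suc_eq)
  next
    fix x :: "enat list" show "length (proto_run [f1 N, f2 N] x) \<le> 4" by (simp add: run_eq)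
  qed
  have P2: "\<forall>x y. length x = N \<and> length y = N \<and> num_finite x \<le> 2 \<and> num_finite y \<le> 2 \<and>
        proto_run [f1 N, f2 N] x = proto_run [f1 N, f2 N] y \<longrightarrow> x = y"
  proof (intro allI impI)
    fix x y :: "enat list"
    assume H: "length x = N \<and> length y = N \<and> num_finite x \<le> 2 \<and> num_finite y \<le> 2 \<and>
       proto_run [f1 N, f2 N] x = proto_run [f1 N, f2 N] y"
    then have lx: "length x = N" and ly: "length y = N" and nx: "num_finite x \<le> 2" and ny: "num_finite y \<le> 2"
      and eq: "proto_run [f1 N, f2 N] x = proto_run [f1 N, f2 N] y" by auto
    from eq have eA: "?A x = ?A y" and eC: "?C x = ?C y" by (simp_all add: run_eq)
    show "x = y"
    proof (cases "?A x")
      case infinity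
      then have "\<forall>j<N. x!j = \<infinity>" "\<forall>j<N. y!j = \<infinity>" using inf[OF lx] inf[OF ly] eA by auto
      then show ?thesis using lx ly by (auto intro: nth_equalityI)
    next
      case (enat a)
      then obtain c where c: "?C x = enat c" using finC[OF lx _ nx] by blast
      have cx: "cls N a c x (trop_row (map (g3 N a c) [0..<N]) x) (trop_row (map (g4 N a c) [0..<N]) x)"
        using cls_of[OF lx assms nx] enat c by blast
      have cy: "cls N a c y (trop_row (map (g3 N a c) [0..<N]) y) (trop_row (map (g4 N a c) [0..<N]) y)"
        using cls_of[OF ly assms ny] enat c eA eC by simp
      have "trop_row (map (g3 N a c) [0..<N]) x = trop_row (map (g3 N a c) [0..<N]) y"
           "trop_row (map (g4 N a c) [0..<N]) x = trop_row (map (g4 N a c) [0..<N]) y"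
      proof -
        have ay: "?A y = enat a" "?C y = enat c" using enat c eA eC by simp_all
        from eq have "[?A x, ?C x, trop_row (map (g3 N a c) [0..<N]) x, trop_row (map (g4 N a c) [0..<N]) x]
          = [?A y, ?C y, trop_row (map (g3 N a c) [0..<N]) y, trop_row (map (g4 N a c) [0..<N]) y]"
          unfolding run_eq using enat c ay by simp
        then show "trop_row (map (g3 N a c) [0..<N]) x = trop_row (map (g3 N a c) [0..<N]) y"
           "trop_row (map (g4 N a c) [0..<N]) x = trop_row (map (g4 N a c) [0..<N]) y" by simp_all
      qed
      then show ?thesis using cls_inj[OF cx _ lx ly] cy by simp
    qed
  qed
  show "tropical_protocol 2 4 N 2 [f1 N, f2 N]"
    unfolding tropical_protocol_def using P1 P2 by simp
qed

end
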